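(* Let $\alpha$ be a unit speed Frenet curve in $\mathbb{E}^3$ and $\beta$ an osculating mate of $\alpha$. Then: (i) $\alpha$ is a plane curve if and only if $\beta$ is a plane curve; (ii) $\alpha$ is a general helix if and only if $\beta$ is a slant helix.
   Context: $\alpha:I\to\mathbb{E}^3$ is parametrized by arclength $s$, with Frenet frame $\{T,N,B\}$, curvature $\kappa>0$, torsion $\tau$. An osculating mate of $\alpha$ is a curve $\beta(s)=\int(x_1T+x_2N)ds$ with smooth $x_1,x_2$, $x_1^2+x_2^2=1$ and $\beta''\perp\mathrm{span}\{T,N\}$; $\beta$ is assumed to be a Frenet curve, unit speed in $s$, with curvature $\bar\kappa$ and torsion $\bar\tau$. A general helix is a curve whose tangent makes a constant angle with a fixed direction, equivalently $\tau/\kappa$ is constant. A slant helix is a curve whose principal normal makes a constant angle with a fixed direction, equivalently $\sigma=\frac{\kappa^2}{(\kappa^2+\tau^2)^{3/2}}\left(\frac{\tau}{\kappa}\right)'$ is constant (computed with the curve's own curvature and torsion). *)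

theory Defs
  imports "HOL-Analysis.Analysis"
begin

definition frenet_curve ::
  "real set \<Rightarrow> (real \<Rightarrow> real^3) \<Rightarrow> (real \<Rightarrow> real^3) \<Rightarrow> (real \<Rightarrow> real^3) \<Rightarrow>
   (real \<Rightarrow> real^3) \<Rightarrow> (real \<Rightarrow> real) \<Rightarrow> (real \<Rightarrow> real) \<Rightarrow> bool" where
  "frenet_curve I \<alpha> T N B \<kappa> \<tau> \<longleftrightarrow>
     open I \<and> is_interval I \<and> I \<noteq> {} \<and>
     (\<forall>s\<in>I.
        (\<alpha> has_vector_derivative T s) (at s) \<and>
        (T has_vector_derivative (\<kappa> s *\<^sub>R N s)) (at s) \<and>
        (N has_vector_derivative (- \<kappa> s *\<^sub>R T s + \<tau> s *\<^sub>R B s)) (at s) \<and>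
        (B has_vector_derivative (- \<tau> s *\<^sub>R N s)) (at s) \<and>
        norm (T s) = 1 \<and> norm (N s) = 1 \<and> inner (T s) (N s) = 0 \<and>
        B s = cross3 (T s) (N s) \<and> \<kappa> s > 0)"

definition plane_curve :: "real set \<Rightarrow> (real \<Rightarrow> real^3) \<Rightarrow> bool" where
  "plane_curve I \<alpha> \<longleftrightarrow> (\<exists>p n. n \<noteq> 0 \<and> (\<forall>s\<in>I. inner (\<alpha> s - p) n = 0))"

text \<open>A unit vector field along the curve makes a constant angle with a fixed
  direction u (for unit vectors the angle is arccos of the inner product).\<close>
definition const_angle_fixed_dir :: "real set \<Rightarrow> (real \<Rightarrow> real^3) \<Rightarrow> bool" where
  "const_angle_fixed_dir I V \<longleftrightarrow>
     (\<exists>u c. norm u = 1 \<and> (\<forall>s\<in>I. inner (V s) u = c))"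

definition general_helix :: "real set \<Rightarrow> (real \<Rightarrow> real^3) \<Rightarrow> bool" where
  "general_helix I T \<longleftrightarrow> const_angle_fixed_dir I T"

definition slant_helix :: "real set \<Rightarrow> (real \<Rightarrow> real^3) \<Rightarrow> bool" where
  "slant_helix I N \<longleftrightarrow> const_angle_fixed_dir I N"

end

theory Submission
  imports Defs
begin

lemma inner_deriv:
  "(f has_vector_derivative f') (at s) \<Longrightarrow> ((\<lambda>t. inner (f t) u) has_real_derivative inner f' u) (at s)"
  using bounded_linear.has_vector_derivative[OF bounded_linear_inner_left, of f f' "at s" u]
  by (simp add: has_real_derivative_iff_has_vector_derivative)

lemma deriv_const_zero:
  assumes "open I" "s \<in> I" "(f has_real_derivative d) (at s)" "\<forall>t\<in>I. f t = c"
  shows "d = 0"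
proof -
  have "((\<lambda>_. c) has_real_derivative 0) (at s)" by simp
  then have "(f has_real_derivative 0) (at s)"
    by (rule has_field_derivative_transform_within_open[OF _ assms(1,2)]) (use assms(4) in auto)
  then show ?thesis using assms(3) DERIV_unique by blast
qed

lemma cross_cross_left: "cross3 (cross3 a b) c = (a \<bullet> c) *\<^sub>R b - (b \<bullet> c) *\<^sub>R a"
  for a b c :: "real^3"
  by (simp add: cross3_simps forall_3)

lemma sq_one: "(x::real) \<ge> 0 \<Longrightarrow> x * x = 1 \<Longrightarrow> x = 1"
  by (smt (verit) mult_eq_1 mult_le_cancel_left1)

lemma basis_zero:
  fixes T N n :: "real^3"
  assumes "norm T = 1" "norm N = 1" "T \<bullet> N = 0" "T \<bullet> n = 0" "N \<bullet> n = 0" "(cross3 T N) \<bullet> n = 0"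
  shows "n = 0"
proof -
  have c: "cross3 (cross3 T N) n = 0" using assms by (simp add: cross_cross_left)
  have b: "norm (cross3 T N) = 1" using norm_cross_dot[of T N] assms sq_one[OF norm_ge_zero]
    by (simp add: power2_eq_square)
  have "(norm (cross3 (cross3 T N) n))\<^sup>2 + (cross3 T N \<bullet> n)\<^sup>2 = (norm (cross3 T N) * norm n)\<^sup>2"
    by (rule norm_cross_dot)
  then have "(norm n)\<^sup>2 = 0" using c b assms(6) by simp
  then show ?thesis by simp
qed

lemma B_facts:
  fixes T N :: "real^3"
  assumes "norm T = 1" "norm N = 1" "T \<bullet> N = 0"
  shows "cross3 T N \<bullet> T = 0" "cross3 T N \<bullet> N = 0" "norm (cross3 T N) = 1"
    "T \<bullet> T = 1" "N \<bullet> N = 1" "cross3 T N \<bullet> cross3 T N = 1"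
proof -
  show "cross3 T N \<bullet> T = 0" "cross3 T N \<bullet> N = 0"
    using dot_cross_self by (auto simp: inner_commute)
  show b: "norm (cross3 T N) = 1" using norm_cross_dot[of T N] assms sq_one[OF norm_ge_zero]
    by (simp add: power2_eq_square)
  show "T \<bullet> T = 1" "N \<bullet> N = 1" "cross3 T N \<bullet> cross3 T N = 1"
    using assms b by (simp_all flip: power2_norm_eq_inner)
qed

theorem corollary5:
  fixes I :: "real set"
    and \<alpha> T N B \<beta> Tb Nb Bb :: "real \<Rightarrow> real^3"
    and \<kappa> \<tau> \<kappa>b \<tau>b x1 x2 :: "real \<Rightarrow> real"
  assumes alpha: "frenet_curve I \<alpha> T N B \<kappa> \<tau>"
    and beta: "frenet_curve I \<beta> Tb Nb Bb \<kappa>b \<tau>b"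
    and x_diff: "\<forall>s\<in>I. x1 differentiable (at s) \<and> x2 differentiable (at s)"
    and x_unit: "\<forall>s\<in>I. (x1 s)\<^sup>2 + (x2 s)\<^sup>2 = 1"
    and beta_deriv: "\<forall>s\<in>I. (\<beta> has_vector_derivative (x1 s *\<^sub>R T s + x2 s *\<^sub>R N s)) (at s)"
    and osc: "\<forall>s\<in>I. \<forall>v\<in>span {T s, N s}.
                inner (vector_derivative (\<lambda>t. vector_derivative \<beta> (at t)) (at s)) v = 0"
  shows "(plane_curve I \<alpha> \<longleftrightarrow> plane_curve I \<beta>) \<and>
         (general_helix I T \<longleftrightarrow> slant_helix I Nb)"
proof -
  have oI: "open I" and iI: "is_interval I" and neI: "I \<noteq> {}" using alpha by (auto simp: frenet_curve_def)
  have A: "(\<alpha> has_vector_derivative T s) (at s)"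
        "(T has_vector_derivative (\<kappa> s *\<^sub>R N s)) (at s)"
        "(N has_vector_derivative (- \<kappa> s *\<^sub>R T s + \<tau> s *\<^sub>R B s)) (at s)"
        "(B has_vector_derivative (- \<tau> s *\<^sub>R N s)) (at s)"
        "norm (T s) = 1" "norm (N s) = 1" "inner (T s) (N s) = 0"
        "B s = cross3 (T s) (N s)" "\<kappa> s > 0" if "s \<in> I" for s
    using alpha that unfolding frenet_curve_def by blast+
  have Bt: "(\<beta> has_vector_derivative Tb s) (at s)"
        "(Tb has_vector_derivative (\<kappa>b s *\<^sub>R Nb s)) (at s)"
        "(Nb has_vector_derivative (- \<kappa>b s *\<^sub>R Tb s + \<tau>b s *\<^sub>R Bb s)) (at s)"
        "(Bb has_vector_derivative (- \<tau>b s *\<^sub>R Nb s)) (at s)"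
        "norm (Tb s) = 1" "norm (Nb s) = 1" "inner (Tb s) (Nb s) = 0"
        "Bb s = cross3 (Tb s) (Nb s)" "\<kappa>b s > 0" if "s \<in> I" for s
    using beta that unfolding frenet_curve_def by blast+
  have BF: "B s \<bullet> T s = 0" "B s \<bullet> N s = 0" "norm (B s) = 1" "T s \<bullet> T s = 1" "N s \<bullet> N s = 1"
    "B s \<bullet> B s = 1" if "s \<in> I" for s
    using B_facts[OF A(5,6,7)[OF that]] A(8)[OF that] by auto
  have basis: "n = 0" if "T s \<bullet> n = 0" "N s \<bullet> n = 0" "B s \<bullet> n = 0" "s \<in> I" for s n
    using basis_zero[OF A(5,6,7)[OF that(4)]] that A(8)[OF that(4)] by auto
  have Tb_eq: "Tb s = x1 s *\<^sub>R T s + x2 s *\<^sub>R N s" if "s \<in> I" for s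
    using vector_derivative_unique_at[OF Bt(1)[OF that]] beta_deriv that by blast
  have NbTN: "Nb s \<bullet> T s = 0 \<and> Nb s \<bullet> N s = 0" if s: "s \<in> I" for s
  proof -
    have "((\<lambda>t. vector_derivative \<beta> (at t)) has_vector_derivative (\<kappa>b s *\<^sub>R Nb s)) (at s)"
      by (rule has_vector_derivative_transform_within_open[OF Bt(2)[OF s] oI s])
         (use Bt(1) vector_derivative_at in metis)
    then have vd: "vector_derivative (\<lambda>t. vector_derivative \<beta> (at t)) (at s) = \<kappa>b s *\<^sub>R Nb s"
      by (rule vector_derivative_at)
    have "T s \<in> span {T s, N s}" "N s \<in> span {T s, N s}" by (auto intro: span_base)
    then have "(\<kappa>b s *\<^sub>R Nb s) \<bullet> T s = 0" "(\<kappa>b s *\<^sub>R Nb s) \<bullet> N s = 0"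
      using osc s vd by metis+
    then show ?thesis using Bt(9)[OF s] by simp
  qed
  have key: "\<kappa>b s *\<^sub>R Nb s = (x2 s * \<tau> s) *\<^sub>R B s" if s: "s \<in> I" for s
  proof -
    obtain d1 d2 where d1: "(x1 has_real_derivative d1) (at s)" and d2: "(x2 has_real_derivative d2) (at s)"
      using x_diff s DERIV_deriv_iff_real_differentiable by blast
    define E where "E = (x1 s *\<^sub>R (\<kappa> s *\<^sub>R N s) + d1 *\<^sub>R T s) +
       (x2 s *\<^sub>R (- \<kappa> s *\<^sub>R T s + \<tau> s *\<^sub>R B s) + d2 *\<^sub>R N s)"
    have "((\<lambda>t. x1 t *\<^sub>R T t + x2 t *\<^sub>R N t) has_vector_derivative E) (at s)"
      unfolding E_def
      by (intro has_vector_derivative_add has_vector_derivative_scaleR d1 d2 A(2,3)[OF s])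
    then have "(Tb has_vector_derivative E) (at s)"
      by (rule has_vector_derivative_transform_within_open[OF _ oI s]) (simp add: Tb_eq)
    then have eq: "\<kappa>b s *\<^sub>R Nb s = E" using vector_derivative_unique_at Bt(2)[OF s] by blast
    have E2: "E = (d1 - \<kappa> s * x2 s) *\<^sub>R T s + (d2 + \<kappa> s * x1 s) *\<^sub>R N s + (x2 s * \<tau> s) *\<^sub>R B s"
      unfolding E_def by (simp add: algebra_simps)
    have "E \<bullet> T s = 0" "E \<bullet> N s = 0" using eq NbTN[OF s] by auto
    then have "d1 - \<kappa> s * x2 s = 0" "d2 + \<kappa> s * x1 s = 0"
      unfolding E2 using BF[OF s] A(7)[OF s] inner_commute[of "T s" "N s"]
        inner_commute[of "T s" "B s"] inner_commute[of "N s" "B s"]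
      by (simp_all add: inner_add_left inner_add_right)
    then show ?thesis using eq E2 by simp
  qed
  have x2tau: "x2 s * \<tau> s \<noteq> 0" if s: "s \<in> I" for s
  proof
    assume "x2 s * \<tau> s = 0"
    then have "\<kappa>b s *\<^sub>R Nb s = 0" using key[OF s] by simp
    then show False using Bt(6,9)[OF s] by auto
  qed
  then have tau0: "\<tau> s \<noteq> 0" if "s \<in> I" for s using that by auto
  define e where "e s = Nb s \<bullet> B s" for s
  have Nbe: "Nb s = e s *\<^sub>R B s" and e2: "e s * e s = 1" if s: "s \<in> I" for s
  proof -
    have "Nb s = inverse (\<kappa>b s) *\<^sub>R (\<kappa>b s *\<^sub>R Nb s)" using Bt(9)[OF s] by simp
    also have "\<dots> = (x2 s * \<tau> s / \<kappa>b s) *\<^sub>R B s" unfolding key[OF s]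
      by (simp add: divide_inverse mult.commute)
    finally have nb: "Nb s = (x2 s * \<tau> s / \<kappa>b s) *\<^sub>R B s" .
    have "e s = x2 s * \<tau> s / \<kappa>b s" unfolding e_def nb using BF(6)[OF s] by simp
    then show ne: "Nb s = e s *\<^sub>R B s" using nb by simp
    have "norm (Nb s) = \<bar>e s\<bar> * norm (B s)" unfolding ne by (rule norm_scaleR)
    then have "\<bar>e s\<bar> = 1" using Bt(6)[OF s] BF(3)[OF s] by simp
    then show "e s * e s = 1" by (metis abs_mult_self_eq mult_1_right)
  qed
  have "e constant_on I"
  proof (rule continuous_discrete_range_constant)
    show "connected I" using iI by (simp add: is_interval_connected)
    show "continuous_on I e"
      unfolding e_def
      by (intro continuous_at_imp_continuous_on ballI continuous_inner
          has_vector_derivative_continuous[OF Bt(3)] has_vector_derivative_continuous[OF A(4)])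
    fix x assume x: "x \<in> I"
    show "\<exists>d>0. \<forall>y. y \<in> I \<and> e y \<noteq> e x \<longrightarrow> d \<le> norm (e y - e x)"
    proof (intro exI[of _ 1] conjI allI impI)
      fix y assume y: "y \<in> I \<and> e y \<noteq> e x"
      have "e x = 1 \<or> e x = -1" "e y = 1 \<or> e y = -1"
        using e2 x y by (metis mult_cancel_left1 square_eq_1_iff)+
      then show "1 \<le> norm (e y - e x)" using y by auto
    qed simp
  qed
  then obtain e0 where e0: "\<And>s. s \<in> I \<Longrightarrow> e s = e0" unfolding constant_on_def by blast
  obtain s0 where s0: "s0 \<in> I" using neI by blast
  have e0sq: "e0 * e0 = 1" using e2[OF s0] e0[OF s0] by simp
  have NbB: "Nb s = e0 *\<^sub>R B s" if "s \<in> I" for s using Nbe e0 that by simp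
  have BNb: "B s = e0 *\<^sub>R Nb s" if "s \<in> I" for s using NbB[OF that] e0sq by simp
  have dT: "((\<lambda>t. T t \<bullet> n) has_real_derivative \<kappa> s * (N s \<bullet> n)) (at s)" if "s \<in> I" for s n
    using inner_deriv[OF A(2)[OF that], of n] by simp
  have dN: "((\<lambda>t. N t \<bullet> n) has_real_derivative - \<kappa> s * (T s \<bullet> n) + \<tau> s * (B s \<bullet> n)) (at s)"
    if "s \<in> I" for s n
    using inner_deriv[OF A(3)[OF that], of n] by (simp add: inner_add_left inner_diff_left)
  have dB: "((\<lambda>t. B t \<bullet> n) has_real_derivative - \<tau> s * (N s \<bullet> n)) (at s)" if "s \<in> I" for s n
    using inner_deriv[OF A(4)[OF that], of n] by simp
  have notplane: "n = 0" if Bn: "\<forall>s\<in>I. B s \<bullet> n = 0" for n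
  proof -
    have Nn: "\<forall>s\<in>I. N s \<bullet> n = 0"
      using deriv_const_zero[OF oI _ dB Bn] tau0 by simp
    have Tn: "\<forall>s\<in>I. T s \<bullet> n = 0"
    proof
      fix s assume s: "s \<in> I"
      have "- \<kappa> s * (T s \<bullet> n) + \<tau> s * (B s \<bullet> n) = 0"
        by (rule deriv_const_zero[OF oI s dN[OF s] Nn])
      then show "T s \<bullet> n = 0" using Bn s A(9)[OF s] by simp
    qed
    show "n = 0" using basis[OF _ _ _ s0] Tn Nn Bn s0 by blast
  qed
  have p1: "\<not> plane_curve I \<alpha>"
  proof
    assume "plane_curve I \<alpha>"
    then obtain p n where n: "n \<noteq> 0" and pn: "\<forall>s\<in>I. (\<alpha> s - p) \<bullet> n = 0"
      unfolding plane_curve_def by blast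
    have Tn: "\<forall>s\<in>I. T s \<bullet> n = 0"
    proof
      fix s assume s: "s \<in> I"
      have "((\<lambda>t. \<alpha> t - p) has_vector_derivative T s - 0) (at s)"
        by (intro has_vector_derivative_diff A(1)[OF s] has_vector_derivative_const)
      from inner_deriv[OF this, of n] show "T s \<bullet> n = 0"
        using deriv_const_zero[OF oI s _ pn] by simp
    qed
    have Nn: "\<forall>s\<in>I. N s \<bullet> n = 0"
      using deriv_const_zero[OF oI _ dT Tn] A(9) by (metis mult_eq_0_iff less_irrefl)
    have Bn: "\<forall>s\<in>I. B s \<bullet> n = 0"
    proof
      fix s assume s: "s \<in> I"
      have "- \<kappa> s * (T s \<bullet> n) + \<tau> s * (B s \<bullet> n) = 0"
        by (rule deriv_const_zero[OF oI s dN[OF s] Nn])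
      then show "B s \<bullet> n = 0" using Tn s tau0[OF s] by simp
    qed
    show False using notplane[OF Bn] n by simp
  qed
  have p2: "\<not> plane_curve I \<beta>"
  proof
    assume "plane_curve I \<beta>"
    then obtain p n where n: "n \<noteq> 0" and pn: "\<forall>s\<in>I. (\<beta> s - p) \<bullet> n = 0"
      unfolding plane_curve_def by blast
    have Tn: "\<forall>s\<in>I. Tb s \<bullet> n = 0"
    proof
      fix s assume s: "s \<in> I"
      have "((\<lambda>t. \<beta> t - p) has_vector_derivative Tb s - 0) (at s)"
        by (intro has_vector_derivative_diff Bt(1)[OF s] has_vector_derivative_const)
      from inner_deriv[OF this, of n] show "Tb s \<bullet> n = 0"
        using deriv_const_zero[OF oI s _ pn] by simp
    qed
    have Bn: "\<forall>s\<in>I. B s \<bullet> n = 0"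
    proof
      fix s assume s: "s \<in> I"
      have "(\<kappa>b s *\<^sub>R Nb s) \<bullet> n = 0"
        using deriv_const_zero[OF oI s inner_deriv[OF Bt(2)[OF s]] Tn] by simp
      then show "B s \<bullet> n = 0" using key[OF s] x2tau[OF s] by simp
    qed
    show False using notplane[OF Bn] n by simp
  qed
  have h1: "general_helix I T \<Longrightarrow> slant_helix I Nb"
  proof -
    assume "general_helix I T"
    then obtain u c where u: "norm u = 1" and Tu: "\<forall>s\<in>I. T s \<bullet> u = c"
      unfolding general_helix_def const_angle_fixed_dir_def by blast
    have Nu: "\<forall>s\<in>I. N s \<bullet> u = 0"
      using deriv_const_zero[OF oI _ dT Tu] A(9) by (metis mult_eq_0_iff less_irrefl)
    have "\<exists>c. \<forall>x\<in>I. B x \<bullet> u = c"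
    proof (rule has_field_derivative_zero_constant)
      show "convex I" using iI by (simp add: is_interval_convex)
      fix x assume x: "x \<in> I"
      show "((\<lambda>t. B t \<bullet> u) has_field_derivative 0) (at x within I)"
        using has_field_derivative_at_within[OF dB[OF x, of u]] Nu x by simp
    qed
    then obtain c' where "\<forall>x\<in>I. B x \<bullet> u = c'" by blast
    then have "\<forall>x\<in>I. Nb x \<bullet> u = e0 * c'" using NbB by simp
    then show "slant_helix I Nb" using u
      unfolding slant_helix_def const_angle_fixed_dir_def by blast
  qed
  have h2: "slant_helix I Nb \<Longrightarrow> general_helix I T"
  proof -
    assume "slant_helix I Nb"
    then obtain u c where u: "norm u = 1" and Nbu: "\<forall>s\<in>I. Nb s \<bullet> u = c"
      unfolding slant_helix_def const_angle_fixed_dir_def by blast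
    have Bu: "\<forall>s\<in>I. B s \<bullet> u = e0 * c" using BNb Nbu by simp
    have Nu: "\<forall>s\<in>I. N s \<bullet> u = 0"
      using deriv_const_zero[OF oI _ dB Bu] tau0 by simp
    have "\<exists>c. \<forall>x\<in>I. T x \<bullet> u = c"
    proof (rule has_field_derivative_zero_constant)
      show "convex I" using iI by (simp add: is_interval_convex)
      fix x assume x: "x \<in> I"
      show "((\<lambda>t. T t \<bullet> u) has_field_derivative 0) (at x within I)"
        using has_field_derivative_at_within[OF dT[OF x, of u]] Nu x by simp
    qed
    then show "general_helix I T" using u
      unfolding general_helix_def const_angle_fixed_dir_def by blast
  qed
  show ?thesis using p1 p2 h1 h2 by blast
qed

end
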